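(* There is exactly one subset $\mathcal{U}\subseteq\mathbb{P}_2(3)$ with $|\mathcal{U}|=2^3$ that is an equidistant linear code (for some choice of the addition $\boxplus$).
   Context: $\mathbb{P}_2(3)$ denotes the set of all subspaces of $\mathbb{F}_2^3$. For subspaces $X,Y$ the subspace distance is $d_S(X,Y)=\dim X+\dim Y-2\dim(X\cap Y)$. A linear code in $\mathbb{P}_q(n)$ is a subset $\mathcal{U}\subseteq\mathbb{P}_q(n)$ with $\{0\}\in\mathcal{U}$ for which there exists a map $\boxplus:\mathcal{U}\times\mathcal{U}\to\mathcal{U}$ such that (i) $(\mathcal{U},\boxplus)$ is an abelian group; (ii) its identity element is $\{0\}$; (iii) $X\boxplus X=\{0\}$ for all $X\in\mathcal{U}$; (iv) $d_S(Y_1\boxplus X,Y_2\boxplus X)=d_S(Y_1,Y_2)$ for all $Y_1,Y_2,X\in\mathcal{U}$. It is equidistant if there is $r$ with $d_S(X,Y)=r$ for all distinct $X,Y\in\mathcal{U}$. *)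

theory Defs
  imports "HOL-Analysis.Analysis" "HOL-Library.Z2" "HOL-Algebra.Group"
begin

type_synonym vec3 = "bit ^ 3"

definition P23 :: "vec3 set set" where
  "P23 = {X. vec.subspace X}"

text \<open>Subspace distance d_S(X,Y) = dim X + dim Y - 2 dim (X \<inter> Y) (always nonnegative).\<close>
definition dS :: "vec3 set \<Rightarrow> vec3 set \<Rightarrow> nat" where
  "dS X Y = vec.dim X + vec.dim Y - 2 * vec.dim (X \<inter> Y)"

definition linear_code_with :: "vec3 set set \<Rightarrow> (vec3 set \<Rightarrow> vec3 set \<Rightarrow> vec3 set) \<Rightarrow> bool" where
  "linear_code_with U bplus \<longleftrightarrow>
     U \<subseteq> P23 \<and> {0} \<in> U \<and>
     comm_group \<lparr>carrier = U, monoid.mult = bplus, one = {0}\<rparr> \<and>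
     (\<forall>X\<in>U. bplus X X = {0}) \<and>
     (\<forall>Y1\<in>U. \<forall>Y2\<in>U. \<forall>X\<in>U. dS (bplus Y1 X) (bplus Y2 X) = dS Y1 Y2)"

definition linear_code :: "vec3 set set \<Rightarrow> bool" where
  "linear_code U \<longleftrightarrow> (\<exists>bplus. linear_code_with U bplus)"

definition equidistant :: "vec3 set set \<Rightarrow> bool" where
  "equidistant U \<longleftrightarrow> (\<exists>r. \<forall>X\<in>U. \<forall>Y\<in>U. X \<noteq> Y \<longrightarrow> dS X Y = r)"

end

theory Submission
  imports Defs
begin

lemma UNIV_bit: "(UNIV :: bit set) = {0, 1}"
  by (auto intro: bit.exhaust)

instance bit :: finite
  by standard (simp add: UNIV_bit)

lemma card_bit: "CARD(bit) = 2"
  by (simp add: UNIV_bit)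

lemma card_vec3: "CARD(vec3) = 8"
  by (simp add: card_bit)

lemma vec3_add_self[simp]: "(x::vec3) + x = 0"
  by (simp add: vec_eq_iff)

lemma vec3_minus[simp]: "(x::vec3) - y = x + y"
  by (simp add: vec_eq_iff)

lemma bit_add_self[simp]: "(x::bit) + x = 0"
  by simp

definition dot :: "vec3 \<Rightarrow> vec3 \<Rightarrow> bit" where
  "dot a x = a$1 * x$1 + a$2 * x$2 + a$3 * x$3"

declare add_bit_eq_xor[simp del] mult_bit_eq_and[simp del]

definition K :: "vec3 \<Rightarrow> vec3 set" where
  "K a = {x. dot a x = 0}"

lemma dot_add: "dot a (x + y) = dot a x + dot a y"
  by (simp add: dot_def algebra_simps)

lemma dot_scale: "dot a (c *s x) = c * dot a x"
  by (simp add: dot_def algebra_simps)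

lemma dot_axis: "dot a (axis i 1) = a$i"
  using exhaust_3[of i] by (auto simp: dot_def axis_def)

lemma subspace_K: "vec.subspace (K a)"
  unfolding vec.subspace_def K_def
  by (auto simp: dot_add dot_scale) (simp add: dot_def)

lemma span_insert_vec3:
  fixes b :: vec3
  shows "vec.span (insert b B) = vec.span B \<union> (\<lambda>y. b + y) ` vec.span B" (is "?L = ?R")
proof
  show "?L \<subseteq> ?R"
  proof
    fix x assume "x \<in> ?L"
    then obtain k :: bit where k: "x - k *s b \<in> vec.span B" by (auto simp: vec.span_insert)
    show "x \<in> ?R"
    proof (cases "k = 0")
      case True then show ?thesis using k by simp
    next
      case False
      then have "k = 1" by (cases k) auto
      then have "x + b \<in> vec.span B" using k by simp
      moreover have "x = b + (x + b)" by (metis add.left_commute vec3_add_self add.right_neutral)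
      ultimately show ?thesis by blast
    qed
  qed
next
  show "?R \<subseteq> ?L"
    by (auto intro: vec.span_mono[THEN subsetD] vec.span_add vec.span_base)
qed

lemma card_span_indep:
  fixes B :: "vec3 set"
  shows "finite B \<Longrightarrow> vec.independent B \<Longrightarrow> card (vec.span B) = 2 ^ card B"
proof (induction B rule: finite_induct)
  case empty then show ?case by simp
next
  case (insert b B)
  have "vec.independent B \<and> b \<notin> vec.span B"
    using insert.prems insert.hyps(2) vec.independent_insert[of b B] by simp
  then have ind: "vec.independent B" and nb: "b \<notin> vec.span B" by auto
  have disj: "vec.span B \<inter> (\<lambda>y. b + y) ` vec.span B = {}"
  proof (rule ccontr)
    assume "vec.span B \<inter> (\<lambda>y. b + y) ` vec.span B \<noteq> {}"
    then obtain y where y: "y \<in> vec.span B" "b + y \<in> vec.span B" by auto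
    then have "(b + y) + y \<in> vec.span B" using vec.span_add by blast
    moreover have "(b + y) + y = b" by (simp add: add.assoc)
    ultimately show False using nb by simp
  qed
  have "card (vec.span (insert b B)) = card (vec.span B) + card ((\<lambda>y. b + y) ` vec.span B)"
    unfolding span_insert_vec3 by (rule card_Un_disjoint) (use disj in auto)
  also have "card ((\<lambda>y. b + y) ` vec.span B) = card (vec.span B)"
    by (rule card_image) (auto simp: inj_on_def)
  finally show ?case using insert ind by simp
qed

lemma card_subspace:
  fixes S :: "vec3 set"
  assumes "vec.subspace S"
  shows "card S = 2 ^ vec.dim S"
proof -
  obtain B where "finite B" "B \<subseteq> S" "vec.independent B" "vec.span B = S" "card B = vec.dim S"
    using vec.basis_subspace_exists[OF assms] by metis
  then show ?thesis using card_span_indep by metis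
qed

lemma dim_iff_card:
  fixes S :: "vec3 set"
  assumes "vec.subspace S"
  shows "vec.dim S = n \<longleftrightarrow> card S = 2 ^ n"
  using card_subspace[OF assms] by simp

lemma card_K:
  assumes "a \<noteq> 0"
  shows "card (K a) = 4"
proof -
  obtain i where i: "a$i = 1" using assms by (auto simp: vec_eq_iff)
  define e :: vec3 where "e = axis i 1"
  have de: "dot a e = 1" using i by (simp add: e_def dot_axis)
  have img: "(\<lambda>x. x + e) ` K a = - K a"
  proof
    show "(\<lambda>x. x + e) ` K a \<subseteq> - K a" by (auto simp: K_def dot_add de)
  next
    show "- K a \<subseteq> (\<lambda>x. x + e) ` K a"
    proof
      fix y assume "y \<in> - K a"
      then have "dot a y = 1" by (auto simp: K_def)
      then have "y + e \<in> K a" by (simp add: K_def dot_add de)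
      moreover have "y = (y + e) + e" by (simp add: add.assoc)
      ultimately show "y \<in> (\<lambda>x. x + e) ` K a" by blast
    qed
  qed
  have "card (- K a) = card (K a)"
    unfolding img[symmetric] by (rule card_image) (auto simp: inj_on_def)
  moreover have "card (K a) + card (- K a) = 8"
    using card_Un_disjoint[of "K a" "- K a"] card_vec3 by (simp add: Compl_partition)
  ultimately show ?thesis by simp
qed

lemma K_inj:
  assumes "K a = K b"
  shows "a = b"
proof -
  have "dot a x = dot b x" for x
  proof -
    have "dot a x = 0 \<longleftrightarrow> dot b x = 0" using assms by (auto simp: K_def set_eq_iff)
    then show ?thesis by (cases "dot a x"; cases "dot b x") auto
  qed
  then show ?thesis by (auto simp: vec_eq_iff dot_axis[symmetric])
qed

lemma K_0: "K 0 = UNIV"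
  by (simp add: K_def dot_def)

lemma plane_is_K:
  fixes P :: "vec3 set"
  assumes sub: "vec.subspace P" and c4: "card P = 4"
  shows "\<exists>a. a \<noteq> 0 \<and> P = K a"
proof -
  have cos: "x + y \<in> P" if x: "x \<notin> P" and y: "y \<notin> P" for x y
  proof -
    define T where "T = (\<lambda>p. x + p) ` P"
    have cT: "card T = 4" unfolding T_def using c4 by (subst card_image) (auto simp: inj_on_def)
    have dis: "P \<inter> T = {}"
    proof (rule ccontr)
      assume "P \<inter> T \<noteq> {}"
      then obtain p where p: "p \<in> P" "x + p \<in> P" by (auto simp: T_def)
      then have "(x + p) + p \<in> P" using vec.subspace_add[OF sub] by blast
      then show False using x by (simp add: add.assoc)
    qed
    have "card (P \<union> T) = 8" using card_Un_disjoint[OF finite finite dis] c4 cT by simp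
    then have "P \<union> T = UNIV" using card_vec3 by (metis card_eq_UNIV_imp_eq_UNIV finite)
    then have "y \<in> T" using y by auto
    then obtain p where "p \<in> P" "y = x + p" by (auto simp: T_def)
    then show ?thesis by (simp add: add.assoc[symmetric])
  qed
  define f :: "vec3 \<Rightarrow> bit" where "f x = (if x \<in> P then 0 else 1)" for x
  have f0: "f 0 = 0" using vec.subspace_0[OF sub] by (simp add: f_def)
  have fadd: "f (x + y) = f x + f y" for x y
  proof (cases "x \<in> P"; cases "y \<in> P")
    assume "x \<in> P" "y \<in> P" then show ?thesis using vec.subspace_add[OF sub] by (simp add: f_def)
  next
    assume a: "x \<in> P" "y \<notin> P"
    have "x + y \<notin> P"
    proof
      assume "x + y \<in> P"
      then have "x + (x + y) \<in> P" using a vec.subspace_add[OF sub] by blast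
      then show False using a by (simp add: add.assoc[symmetric])
    qed
    then show ?thesis using a by (simp add: f_def)
  next
    assume a: "x \<notin> P" "y \<in> P"
    have "x + y \<notin> P"
    proof
      assume "x + y \<in> P"
      then have "(x + y) + y \<in> P" using a vec.subspace_add[OF sub] by blast
      then show False using a by (simp add: add.assoc)
    qed
    then show ?thesis using a by (simp add: f_def)
  next
    assume a: "x \<notin> P" "y \<notin> P"
    then show ?thesis using cos[OF a] by (simp add: f_def)
  qed
  have fsc: "f (c *s v) = c * f v" for c v
    by (cases c) (simp_all add: f0)
  define a :: vec3 where "a = (\<chi> i. f (axis i 1))"
  have fdot: "f x = dot a x" for x
  proof -
    have "x = x$1 *s axis 1 1 + x$2 *s axis 2 1 + x$3 *s axis 3 1"
      using basis_expansion[of x] by (simp add: sum_3)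
    then have "f x = f (x$1 *s axis 1 1 + x$2 *s axis 2 1 + x$3 *s axis 3 1)" by simp
    also have "\<dots> = x$1 * f (axis 1 1) + x$2 * f (axis 2 1) + x$3 * f (axis 3 1)"
      by (simp add: fadd fsc)
    also have "\<dots> = dot a x" by (simp add: a_def dot_def mult.commute)
    finally show ?thesis .
  qed
  have PK: "P = K a" by (auto simp: K_def fdot[symmetric] f_def)
  moreover have "a \<noteq> 0"
  proof
    assume "a = 0"
    then have "P = UNIV" using PK K_0 by simp
    then show False using c4 card_vec3 by simp
  qed
  ultimately show ?thesis by blast
qed

lemma dim_K: "a \<noteq> 0 \<Longrightarrow> vec.dim (K a) = 2"
  using dim_iff_card[OF subspace_K] card_K by simp

lemma dim_0: "vec.dim {0::vec3} = 0"
  using dim_iff_card[of "{0::vec3}" 0] by simp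

lemma dim_le3: "vec.dim (S::vec3 set) \<le> 3"
  using dim_subset_UNIV_cart_gen[of S] by simp

lemma dS_self: "dS X X = 0"
  by (simp add: dS_def)

lemma dS_0: "vec.subspace X \<Longrightarrow> dS {0} X = vec.dim X"
proof -
  assume "vec.subspace X"
  then have "{0} \<inter> X = {0}" using vec.subspace_0 by blast
  then show ?thesis by (simp add: dS_def dim_0)
qed

lemma dS_0': "vec.subspace X \<Longrightarrow> dS X {0} = vec.dim X"
  using dS_0 by (simp add: dS_def Int_commute)

lemma inter_dim_less:
  fixes X Y :: "vec3 set"
  assumes sX: "vec.subspace X" and sY: "vec.subspace Y"
    and dX: "vec.dim X = r" and dY: "vec.dim Y = r" and ne: "X \<noteq> Y"
  shows "vec.dim (X \<inter> Y) < r"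
proof -
  have sI: "vec.subspace (X \<inter> Y)" using sX sY by (rule vec.subspace_inter)
  have le: "vec.dim (X \<inter> Y) \<le> r" using vec.dim_subset[of "X \<inter> Y" X] dX by auto
  show ?thesis
  proof (rule ccontr)
    assume "\<not> ?thesis"
    then have "vec.dim (X \<inter> Y) = r" using le by simp
    then have c: "card (X \<inter> Y) = 2 ^ r" using card_subspace[OF sI] by simp
    have "X \<inter> Y = X" using card_subset_eq[of X "X \<inter> Y"] c card_subspace[OF sX] dX by auto
    moreover have "X \<inter> Y = Y" using card_subset_eq[of Y "X \<inter> Y"] c card_subspace[OF sY] dY by auto
    ultimately show False using ne by simp
  qed
qed

lemma dS_K:
  assumes "a \<noteq> 0" "b \<noteq> 0" "a \<noteq> b"
  shows "dS (K a) (K b) = 2"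
proof -
  have ne: "K a \<noteq> K b" using K_inj assms(3) by blast
  have lt: "vec.dim (K a \<inter> K b) < 2"
    using inter_dim_less[OF subspace_K subspace_K dim_K[OF assms(1)] dim_K[OF assms(2)] ne] .
  have "vec.dim {x + y |x y. x \<in> K a \<and> y \<in> K b} + vec.dim (K a \<inter> K b) = vec.dim (K a) + vec.dim (K b)"
    by (rule vec.dim_sums_Int[OF subspace_K subspace_K])
  then have "vec.dim (K a \<inter> K b) = 1"
    using lt dim_K[OF assms(1)] dim_K[OF assms(2)] dim_le3[of "{x + y |x y. x \<in> K a \<and> y \<in> K b}"] by linarith
  then show ?thesis by (simp add: dS_def dim_K assms)
qed

definition W :: "vec3 set set" where
  "W = insert {0} (K ` (- {0}))"

lemma zero_notin_Kimg: "{0} \<notin> K ` (- {0})"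
proof
  assume "{0} \<in> K ` (- {0})"
  then obtain a where "a \<noteq> 0" "{0} = K a" by auto
  then have "card (K a) = 1" using \<open>{0} = K a\<close>[symmetric] by simp
  then show False using card_K[of a] \<open>a \<noteq> 0\<close> by simp
qed

lemma W_sub: "W \<subseteq> P23"
  by (auto simp: W_def P23_def subspace_K)

lemma card_W: "card W = 8"
proof -
  have "inj_on K (- {0})" using K_inj by (auto simp: inj_on_def)
  then have "card (K ` (- {0})) = card (- {0::vec3})" by (rule card_image)
  also have "\<dots> = 7" using card_vec3 card_Diff_singleton[of "0::vec3" UNIV]
    by (simp add: Compl_eq_Diff_UNIV)
  finally show ?thesis using zero_notin_Kimg by (simp add: W_def)
qed

lemma W_dist:
  assumes "X \<in> W" "Y \<in> W" "X \<noteq> Y" shows "dS X Y = 2"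
proof (cases "X = {0}")
  case True
  then obtain b where "b \<noteq> 0" "Y = K b" using assms by (auto simp: W_def)
  then show ?thesis using True by (simp add: dS_0 subspace_K dim_K)
next
  case False
  then obtain a where a: "a \<noteq> 0" "X = K a" using assms by (auto simp: W_def)
  show ?thesis
  proof (cases "Y = {0}")
    case True then show ?thesis using a by (simp add: dS_0' subspace_K dim_K)
  next
    case False
    then obtain b where "b \<noteq> 0" "Y = K b" using assms by (auto simp: W_def)
    then show ?thesis using a assms(3) dS_K by metis
  qed
qed

lemma W_dS: "X \<in> W \<Longrightarrow> Y \<in> W \<Longrightarrow> dS X Y = (if X = Y then 0 else 2)"
  using W_dist dS_self by auto

definition phi :: "vec3 \<Rightarrow> vec3 set" where
  "phi a = (if a = 0 then {0} else K a)"

lemma phi_inj: "inj phi"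
proof (rule injI)
  fix a b assume e: "phi a = phi b"
  show "a = b"
  proof (cases "a = 0"; cases "b = 0")
    assume "a \<noteq> 0" "b \<noteq> 0" then show ?thesis using e K_inj by (simp add: phi_def)
  next
    assume "a = 0" "b \<noteq> 0" then show ?thesis using e zero_notin_Kimg by (auto simp: phi_def)
  next
    assume "a \<noteq> 0" "b = 0" then show ?thesis using e zero_notin_Kimg by (auto simp: phi_def)
  qed simp
qed

lemma phi_range: "range phi = W"
  by (auto simp: phi_def W_def image_iff)

definition psi :: "vec3 set \<Rightarrow> vec3" where
  "psi = inv_into UNIV phi"

lemma psi_phi[simp]: "psi (phi a) = a"
  by (simp add: psi_def phi_inj)

lemma phi_psi: "X \<in> W \<Longrightarrow> phi (psi X) = X"
  unfolding psi_def by (rule f_inv_into_f) (simp add: phi_range)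

lemma phi_W[simp]: "phi a \<in> W"
  using phi_range by blast

lemma phi_0: "phi 0 = {0}" by (simp add: phi_def)

definition bp :: "vec3 set \<Rightarrow> vec3 set \<Rightarrow> vec3 set" where
  "bp X Y = phi (psi X + psi Y)"

lemma W_linear: "linear_code_with W bp"
proof -
  have p0: "psi {0} = 0" using psi_phi[of 0] by (simp add: phi_0)
  have grp: "comm_group \<lparr>carrier = W, monoid.mult = bp, one = {0}\<rparr>"
  proof (rule comm_groupI, goal_cases)
    case 1 then show ?case by (simp add: bp_def)
  next
    case 2 then show ?case by (simp add: W_def)
  next
    case 3 then show ?case by (simp add: bp_def add.assoc)
  next
    case 4 then show ?case by (simp add: bp_def add.commute)
  next
    case 5 then show ?case by (simp add: bp_def p0 phi_psi)
  next
    case (6 x) then show ?case by (intro bexI[of _ x]) (simp_all add: bp_def phi_0)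
  qed
  have inv: "\<forall>X\<in>W. bp X X = {0}" by (simp add: bp_def phi_0)
  have iso: "dS (bp Y1 X) (bp Y2 X) = dS Y1 Y2" if "Y1 \<in> W" "Y2 \<in> W" "X \<in> W" for Y1 Y2 X
  proof -
    have "bp Y1 X = bp Y2 X \<longleftrightarrow> Y1 = Y2"
    proof
      assume "bp Y1 X = bp Y2 X"
      then have "psi Y1 + psi X = psi Y2 + psi X" using phi_inj by (simp add: bp_def inj_eq)
      then have "psi Y1 = psi Y2" by simp
      then show "Y1 = Y2" using phi_psi that by metis
    qed simp
    then show ?thesis using that by (simp add: W_dS bp_def)
  qed
  show ?thesis unfolding linear_code_with_def
    using W_sub grp inv iso by (auto simp: W_def)
qed

theorem proposition1:
  shows "\<exists>!U. U \<subseteq> P23 \<and> card U = 2 ^ 3 \<and> linear_code U \<and> equidistant U"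
proof (rule ex1I[of _ W])
  show "W \<subseteq> P23 \<and> card W = 2 ^ 3 \<and> linear_code W \<and> equidistant W"
    using W_sub card_W W_linear W_dist by (auto simp: linear_code_def equidistant_def)
next
  fix U assume U: "U \<subseteq> P23 \<and> card U = 2 ^ 3 \<and> linear_code U \<and> equidistant U"
  then have UP: "U \<subseteq> P23" and cU: "card U = 8" by auto
  have z: "{0} \<in> U" using U by (auto simp: linear_code_def linear_code_with_def)
  obtain r where r: "\<forall>X\<in>U. \<forall>Y\<in>U. X \<noteq> Y \<longrightarrow> dS X Y = r"
    using U by (auto simp: equidistant_def)
  have sub: "vec.subspace X" if "X \<in> U" for X using that UP by (auto simp: P23_def)
  have dimr: "vec.dim X = r" if "X \<in> U" "X \<noteq> {0}" for X
    using r z that dS_0[OF sub[OF that(1)]] by metis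
  have "card (U - {{0}}) = 7" using cU z by simp
  then have "U - {{0}} \<noteq> {}"
  proof (intro notI)
    assume "U - {{0}} = {}"
    with \<open>card (U - {{0}}) = 7\<close> show False by simp
  qed
  then obtain X where X: "X \<in> U - {{0}}" by blast
  have "card (U - {{0}} - {X}) = 6" using X \<open>card (U - {{0}}) = 7\<close> by simp
  then have "U - {{0}} - {X} \<noteq> {}"
  proof (intro notI)
    assume "U - {{0}} - {X} = {}"
    with \<open>card (U - {{0}} - {X}) = 6\<close> show False by simp
  qed
  then obtain Y where Y: "Y \<in> U - {{0}} - {X}" by blast
  have XY: "X \<in> U - {{0}}" "Y \<in> U - {{0}}" "X \<noteq> Y" using X Y by auto
  have dX: "vec.dim X = r" and dY: "vec.dim Y = r" using XY dimr by auto
  have lt: "vec.dim (X \<inter> Y) < r" using inter_dim_less[OF sub sub dX dY] XY by auto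
  have "dS X Y = r" using r XY by auto
  then have eq: "r + r - 2 * vec.dim (X \<inter> Y) = r" using dX dY by (simp add: dS_def)
  have r3: "r \<le> 3" using dX dim_le3[of X] by simp
  have r2: "r = 2" using eq lt r3 by presburger
  have "U \<subseteq> W"
  proof
    fix Z assume Z: "Z \<in> U"
    show "Z \<in> W"
    proof (cases "Z = {0}")
      case True then show ?thesis by (simp add: W_def)
    next
      case False
      then have "vec.dim Z = 2" using dimr Z r2 by simp
      then have "card Z = 4" using card_subspace[OF sub[OF Z]] by simp
      then obtain a where "a \<noteq> 0" "Z = K a" using plane_is_K[OF sub[OF Z]] by blast
      then show ?thesis by (simp add: W_def)
    qed
  qed
  then show "U = W" using card_subset_eq[of W U] cU card_W by simp
qed

end
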